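(* Let $\mathcal{C}$ be a category, $A,B$ objects of $\mathcal{C}$, and $L\subseteq\mathcal{C}(A,B)$ a regular language of arrows. If $F:\mathcal{C}\to\mathcal{D}$ is a finitary ULF functor of categories, then the image $F(L)\subseteq\mathcal{D}(F(A),F(B))$ is a regular language of arrows in $\mathcal{D}$.
   Context: Composition is written diagrammatically. A functor $p:\mathcal{Q}\to\mathcal{C}$ is ULF if for every arrow $\alpha$ of $\mathcal{Q}$ and arrows $u,v$ of $\mathcal{C}$ with $p(\alpha)=uv$ there is a unique pair $\beta,\gamma$ with $\alpha=\beta\gamma$, $p(\beta)=u$, $p(\gamma)=v$; it is finitary if the fibers $p^{-1}(A)$ over objects and $p^{-1}(w)$ over arrows are all finite. A nondeterministic finite-state automaton over $\mathcal{C}$ is a tuple $M=(\mathcal{C},\mathcal{Q},p,q_0,q_f)$ with $p:\mathcal{Q}\to\mathcal{C}$ finitary ULF and $q_0,q_f$ objects of $\mathcal{Q}$; it recognizes $\{p(\alpha)\mid\alpha:q_0\to q_f\}\subseteq\mathcal{C}(p(q_0),p(q_f))$. A subset $L\subseteq\mathcal{C}(A,B)$ is a regular language of arrows if it is the language recognized by such an automaton with $p(q_0)=A$ and $p(q_f)=B$. *)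

theory Defs
  imports Main
begin

text \<open>Small categories given explicitly by a set of objects and a set of arrows.
  Composition is diagrammatic: Comp C f g is "f then g", defined when Cod f = Dom g.\<close>

record ('o, 'a) cat =
  Obj  :: "'o set"
  Arr  :: "'a set"
  Dom  :: "'a \<Rightarrow> 'o"
  Cod  :: "'a \<Rightarrow> 'o"
  Id   :: "'o \<Rightarrow> 'a"
  Comp :: "'a \<Rightarrow> 'a \<Rightarrow> 'a"

definition category :: "('o, 'a, 'm) cat_scheme \<Rightarrow> bool" where
  "category C \<longleftrightarrow>
     (\<forall>f\<in>Arr C. Dom C f \<in> Obj C \<and> Cod C f \<in> Obj C) \<and>
     (\<forall>X\<in>Obj C. Id C X \<in> Arr C \<and> Dom C (Id C X) = X \<and> Cod C (Id C X) = X) \<and>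
     (\<forall>f\<in>Arr C. \<forall>g\<in>Arr C. Cod C f = Dom C g \<longrightarrow>
        Comp C f g \<in> Arr C \<and> Dom C (Comp C f g) = Dom C f \<and> Cod C (Comp C f g) = Cod C g) \<and>
     (\<forall>f\<in>Arr C. Comp C (Id C (Dom C f)) f = f \<and> Comp C f (Id C (Cod C f)) = f) \<and>
     (\<forall>f\<in>Arr C. \<forall>g\<in>Arr C. \<forall>h\<in>Arr C. Cod C f = Dom C g \<longrightarrow> Cod C g = Dom C h \<longrightarrow>
        Comp C (Comp C f g) h = Comp C f (Comp C g h))"

definition hom :: "('o, 'a, 'm) cat_scheme \<Rightarrow> 'o \<Rightarrow> 'o \<Rightarrow> 'a set" where
  "hom C X Y = {f \<in> Arr C. Dom C f = X \<and> Cod C f = Y}"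

definition is_functor :: "('o, 'a, 'm) cat_scheme \<Rightarrow> ('p, 'b, 'n) cat_scheme \<Rightarrow>
    ('o \<Rightarrow> 'p) \<Rightarrow> ('a \<Rightarrow> 'b) \<Rightarrow> bool" where
  "is_functor C D Fo Fa \<longleftrightarrow> category C \<and> category D \<and>
     (\<forall>X\<in>Obj C. Fo X \<in> Obj D) \<and>
     (\<forall>f\<in>Arr C. Fa f \<in> Arr D \<and> Dom D (Fa f) = Fo (Dom C f) \<and> Cod D (Fa f) = Fo (Cod C f)) \<and>
     (\<forall>X\<in>Obj C. Fa (Id C X) = Id D (Fo X)) \<and>
     (\<forall>f\<in>Arr C. \<forall>g\<in>Arr C. Cod C f = Dom C g \<longrightarrow> Fa (Comp C f g) = Comp D (Fa f) (Fa g))"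

definition ULF :: "('o, 'a, 'm) cat_scheme \<Rightarrow> ('p, 'b, 'n) cat_scheme \<Rightarrow>
    ('o \<Rightarrow> 'p) \<Rightarrow> ('a \<Rightarrow> 'b) \<Rightarrow> bool" where
  "ULF Q C Po Pa \<longleftrightarrow> is_functor Q C Po Pa \<and>
     (\<forall>\<alpha>\<in>Arr Q. \<forall>u\<in>Arr C. \<forall>v\<in>Arr C. Cod C u = Dom C v \<longrightarrow> Pa \<alpha> = Comp C u v \<longrightarrow>
        (\<exists>!\<beta>\<gamma>. fst \<beta>\<gamma> \<in> Arr Q \<and> snd \<beta>\<gamma> \<in> Arr Q \<and> Cod Q (fst \<beta>\<gamma>) = Dom Q (snd \<beta>\<gamma>) \<and>
              \<alpha> = Comp Q (fst \<beta>\<gamma>) (snd \<beta>\<gamma>) \<and> Pa (fst \<beta>\<gamma>) = u \<and> Pa (snd \<beta>\<gamma>) = v))"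

definition finitary :: "('o, 'a, 'm) cat_scheme \<Rightarrow> ('p, 'b, 'n) cat_scheme \<Rightarrow>
    ('o \<Rightarrow> 'p) \<Rightarrow> ('a \<Rightarrow> 'b) \<Rightarrow> bool" where
  "finitary Q C Po Pa \<longleftrightarrow> is_functor Q C Po Pa \<and>
     (\<forall>X\<in>Obj C. finite {x \<in> Obj Q. Po x = X}) \<and>
     (\<forall>w\<in>Arr C. finite {\<alpha> \<in> Arr Q. Pa \<alpha> = w})"

definition nfa :: "('o, 'a, 'm) cat_scheme \<Rightarrow> ('qo, 'qa, 'n) cat_scheme \<Rightarrow>
    ('qo \<Rightarrow> 'o) \<Rightarrow> ('qa \<Rightarrow> 'a) \<Rightarrow> 'qo \<Rightarrow> 'qo \<Rightarrow> bool" where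
  "nfa C Q Po Pa q0 qf \<longleftrightarrow> ULF Q C Po Pa \<and> finitary Q C Po Pa \<and> q0 \<in> Obj Q \<and> qf \<in> Obj Q"

definition nfa_lang :: "('qo, 'qa, 'n) cat_scheme \<Rightarrow> ('qa \<Rightarrow> 'a) \<Rightarrow> 'qo \<Rightarrow> 'qo \<Rightarrow> 'a set" where
  "nfa_lang Q Pa q0 qf = Pa ` hom Q q0 qf"

text \<open>L \<subseteq> C(A,B) is regular if recognised by some automaton whose state category
  has object type 'qo and arrow type 'qa, with p(q0) = A and p(qf) = B.\<close>

definition regular_lang :: "'qo itself \<Rightarrow> 'qa itself \<Rightarrow> ('o, 'a, 'm) cat_scheme \<Rightarrow>
    'o \<Rightarrow> 'o \<Rightarrow> 'a set \<Rightarrow> bool" where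
  "regular_lang _ _ C A B L \<longleftrightarrow>
     (\<exists>(Q :: ('qo, 'qa) cat) Po Pa q0 qf.
        nfa C Q Po Pa q0 qf \<and> Po q0 = A \<and> Po qf = B \<and> L = nfa_lang Q Pa q0 qf)"

end

theory Submission
  imports Defs
begin

lemma functor_comp:
  assumes "is_functor Q C Po Pa" "is_functor C D Fo Fa"
  shows "is_functor Q D (Fo \<circ> Po) (Fa \<circ> Pa)"
  using assms unfolding is_functor_def by (auto simp: category_def)

lemma ULF_comp:
  assumes P: "ULF Q C Po Pa" and F: "ULF C D Fo Fa"
  shows "ULF Q D (Fo \<circ> Po) (Fa \<circ> Pa)"
  unfolding ULF_def
proof (intro conjI ballI impI)
  have fP: "is_functor Q C Po Pa" and fF: "is_functor C D Fo Fa"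
    using P F by (auto simp: ULF_def)
  show "is_functor Q D (Fo \<circ> Po) (Fa \<circ> Pa)" using functor_comp[OF fP fF] .
  fix \<alpha> u v assume a: "\<alpha> \<in> Arr Q" and u: "u \<in> Arr D" and v: "v \<in> Arr D"
    and uv: "Cod D u = Dom D v" and eq: "(Fa \<circ> Pa) \<alpha> = Comp D u v"
  have Pa: "Pa \<alpha> \<in> Arr C" using fP a by (simp add: is_functor_def)
  from F Pa u v uv eq have "\<exists>!\<beta>\<gamma>. fst \<beta>\<gamma> \<in> Arr C \<and> snd \<beta>\<gamma> \<in> Arr C \<and> Cod C (fst \<beta>\<gamma>) = Dom C (snd \<beta>\<gamma>) \<and>
              Pa \<alpha> = Comp C (fst \<beta>\<gamma>) (snd \<beta>\<gamma>) \<and> Fa (fst \<beta>\<gamma>) = u \<and> Fa (snd \<beta>\<gamma>) = v"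
    unfolding ULF_def by auto
  then obtain b' c' where bc': "b' \<in> Arr C" "c' \<in> Arr C" "Cod C b' = Dom C c'"
     "Pa \<alpha> = Comp C b' c'" "Fa b' = u" "Fa c' = v"
    and uq': "\<And>x y. x \<in> Arr C \<Longrightarrow> y \<in> Arr C \<Longrightarrow> Cod C x = Dom C y \<Longrightarrow> Pa \<alpha> = Comp C x y
        \<Longrightarrow> Fa x = u \<Longrightarrow> Fa y = v \<Longrightarrow> x = b' \<and> y = c'"
    by (metis fst_conv snd_conv)
  from P a bc' have "\<exists>!\<beta>\<gamma>. fst \<beta>\<gamma> \<in> Arr Q \<and> snd \<beta>\<gamma> \<in> Arr Q \<and> Cod Q (fst \<beta>\<gamma>) = Dom Q (snd \<beta>\<gamma>) \<and>
              \<alpha> = Comp Q (fst \<beta>\<gamma>) (snd \<beta>\<gamma>) \<and> Pa (fst \<beta>\<gamma>) = b' \<and> Pa (snd \<beta>\<gamma>) = c'"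
    unfolding ULF_def by auto
  then obtain b c where bc: "b \<in> Arr Q" "c \<in> Arr Q" "Cod Q b = Dom Q c"
     "\<alpha> = Comp Q b c" "Pa b = b'" "Pa c = c'"
    and uq: "\<And>x y. x \<in> Arr Q \<Longrightarrow> y \<in> Arr Q \<Longrightarrow> Cod Q x = Dom Q y \<Longrightarrow> \<alpha> = Comp Q x y
        \<Longrightarrow> Pa x = b' \<Longrightarrow> Pa y = c' \<Longrightarrow> x = b \<and> y = c"
    by (metis fst_conv snd_conv)
  show "\<exists>!\<beta>\<gamma>. fst \<beta>\<gamma> \<in> Arr Q \<and> snd \<beta>\<gamma> \<in> Arr Q \<and> Cod Q (fst \<beta>\<gamma>) = Dom Q (snd \<beta>\<gamma>) \<and>
              \<alpha> = Comp Q (fst \<beta>\<gamma>) (snd \<beta>\<gamma>) \<and> (Fa \<circ> Pa) (fst \<beta>\<gamma>) = u \<and> (Fa \<circ> Pa) (snd \<beta>\<gamma>) = v"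
  proof (rule ex1I[where a="(b,c)"])
    show "fst (b,c) \<in> Arr Q \<and> snd (b,c) \<in> Arr Q \<and> Cod Q (fst (b,c)) = Dom Q (snd (b,c)) \<and>
              \<alpha> = Comp Q (fst (b,c)) (snd (b,c)) \<and> (Fa \<circ> Pa) (fst (b,c)) = u \<and> (Fa \<circ> Pa) (snd (b,c)) = v"
      using bc bc' by simp
  next
    fix p assume h: "fst p \<in> Arr Q \<and> snd p \<in> Arr Q \<and> Cod Q (fst p) = Dom Q (snd p) \<and>
              \<alpha> = Comp Q (fst p) (snd p) \<and> (Fa \<circ> Pa) (fst p) = u \<and> (Fa \<circ> Pa) (snd p) = v"
    obtain x y where p: "p = (x,y)" by (cases p)
    from h p have x: "x \<in> Arr Q" and y: "y \<in> Arr Q" and xy: "Cod Q x = Dom Q y"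
      and ax: "\<alpha> = Comp Q x y" and fx: "Fa (Pa x) = u" and fy: "Fa (Pa y) = v" by auto
    have "Pa x \<in> Arr C" "Pa y \<in> Arr C" "Cod C (Pa x) = Dom C (Pa y)"
         "Pa \<alpha> = Comp C (Pa x) (Pa y)"
      using fP x y xy ax unfolding is_functor_def by auto
    with uq' fx fy have "Pa x = b'" "Pa y = c'" by blast+
    with uq x y xy ax have "x = b \<and> y = c" by blast
    then show "p = (b,c)" using p by simp
  qed
qed

lemma finitary_comp:
  assumes P: "finitary Q C Po Pa" and F: "finitary C D Fo Fa"
  shows "finitary Q D (Fo \<circ> Po) (Fa \<circ> Pa)"
  unfolding finitary_def
proof (intro conjI ballI)
  have fP: "is_functor Q C Po Pa" and fF: "is_functor C D Fo Fa"
    using P F by (auto simp: finitary_def)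
  show "is_functor Q D (Fo \<circ> Po) (Fa \<circ> Pa)" using functor_comp[OF fP fF] .
  fix X assume X: "X \<in> Obj D"
  have "{x \<in> Obj Q. (Fo \<circ> Po) x = X} \<subseteq> (\<Union>y\<in>{y \<in> Obj C. Fo y = X}. {x \<in> Obj Q. Po x = y})"
    using fP unfolding is_functor_def by auto
  moreover have "finite (\<Union>y\<in>{y \<in> Obj C. Fo y = X}. {x \<in> Obj Q. Po x = y})"
    using P F X unfolding finitary_def by auto
  ultimately show "finite {x \<in> Obj Q. (Fo \<circ> Po) x = X}" by (rule finite_subset)
next
  have fP: "is_functor Q C Po Pa"
    using P by (auto simp: finitary_def)
  fix w assume w: "w \<in> Arr D"
  have "{x \<in> Arr Q. (Fa \<circ> Pa) x = w} \<subseteq> (\<Union>y\<in>{y \<in> Arr C. Fa y = w}. {x \<in> Arr Q. Pa x = y})"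
    using fP unfolding is_functor_def by auto
  moreover have "finite (\<Union>y\<in>{y \<in> Arr C. Fa y = w}. {x \<in> Arr Q. Pa x = y})"
    using P F w unfolding finitary_def by auto
  ultimately show "finite {x \<in> Arr Q. (Fa \<circ> Pa) x = w}" by (rule finite_subset)
qed

theorem mainTheorem10:
  fixes C :: "('o, 'a) cat" and D :: "('p, 'b) cat"
    and A B :: 'o and L :: "'a set"
    and Fo :: "'o \<Rightarrow> 'p" and Fa :: "'a \<Rightarrow> 'b"
  assumes "category C" and "category D"
    and "A \<in> Obj C" and "B \<in> Obj C"
    and "regular_lang TYPE('qo) TYPE('qa) C A B L"
    and "is_functor C D Fo Fa" and "ULF C D Fo Fa" and "finitary C D Fo Fa"
  shows "regular_lang TYPE('qo) TYPE('qa) D (Fo A) (Fo B) (Fa ` L)"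
proof -
  from assms(5) obtain Q :: "('qo, 'qa) cat" and Po Pa q0 qf where
    n: "nfa C Q Po Pa q0 qf" and A: "Po q0 = A" and B: "Po qf = B" and L: "L = nfa_lang Q Pa q0 qf"
    unfolding regular_lang_def by blast
  have "nfa D Q (Fo \<circ> Po) (Fa \<circ> Pa) q0 qf"
    using n ULF_comp[OF _ assms(7)] finitary_comp[OF _ assms(8)] unfolding nfa_def by blast
  moreover have "Fa ` L = nfa_lang Q (Fa \<circ> Pa) q0 qf"
    using L unfolding nfa_lang_def by (simp add: image_comp)
  ultimately show ?thesis unfolding regular_lang_def using A B by fastforce
qed

end
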